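(* Let $V$ be a finite set and $\{\eta(t),t\ge0\}$ a consistent configuration process on $\Omega$. Let $\mathbf x=(x_1,\dots,x_n)\in V_n$. Then for all $m\in\{1,\dots,n-1\}$, all $\xi\in\Omega_m$ and all $t\ge0$, $$\mathbb E_{\phi(\mathbf x)}[F(\xi,\eta(t))]=\sum_{1\le i_1<\dots<i_m\le n}\mathbb P_{\phi(x_{i_1},\dots,x_{i_m})}\big(\eta(t)=\xi\big).$$
   Context: $\Lambda\subseteq\mathbb N_0$; $\Omega_n=\{\eta\in\Lambda^V:\sum_x\eta_x=n\}$, $\Omega=\bigcup_n\Omega_n$; for $\mathbf y\in V^k$, $\phi(\mathbf y)=\sum_i\delta_{y_i}$; $V_n=\{\mathbf x\in V^n:\phi(\mathbf x)\in\Omega_n\}$. $F(\xi,\eta):=\prod_{j\in V}\binom{\eta_j}{\xi_j}$. A configuration process is a particle-number-conserving Markov process on $\Omega$ with generator $\mathcal L$; $\mathbb P_\eta,\mathbb E_\eta$ denote its law and expectation started from $\eta$. It is consistent if $[\mathcal L,\mathcal A]=0$, where $\mathcal Af(\eta)=\sum_{x\in V}\eta_xf(\eta-\delta_x)$ (terms with $\eta_x=0$ vanish). *)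

theory Defs
  imports "HOL-Analysis.Analysis" "HOL-Library.Multiset"
begin

text \<open>Configurations on a finite site set V (a type of class finite) are maps V \<Rightarrow> nat.
  Lambda is the set of admissible occupation numbers.\<close>

definition Omega_n :: "nat set \<Rightarrow> nat \<Rightarrow> ('v::finite \<Rightarrow> nat) set" where
  "Omega_n Lam n = {\<eta>. (\<forall>x. \<eta> x \<in> Lam) \<and> (\<Sum>x\<in>UNIV. \<eta> x) = n}"

definition Omega :: "nat set \<Rightarrow> ('v::finite \<Rightarrow> nat) set" where
  "Omega Lam = (\<Union>n. Omega_n Lam n)"

definition phi :: "'v list \<Rightarrow> ('v \<Rightarrow> nat)" where
  "phi ys = (\<lambda>v. count (mset ys) v)"

definition V_n :: "nat set \<Rightarrow> nat \<Rightarrow> ('v::finite) list set" where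
  "V_n Lam n = {xs. length xs = n \<and> phi xs \<in> Omega_n Lam n}"

definition Fdual :: "('v::finite \<Rightarrow> nat) \<Rightarrow> ('v \<Rightarrow> nat) \<Rightarrow> real" where
  "Fdual \<xi> \<eta> = (\<Prod>j\<in>UNIV. real (\<eta> j choose \<xi> j))"

text \<open>Generator of a particle-number-conserving Markov jump process on Omega with
  jump rates q \<eta> \<zeta> (from \<eta> to \<zeta>, within the same Omega_n).\<close>
definition gen :: "nat set \<Rightarrow> (('v::finite \<Rightarrow> nat) \<Rightarrow> ('v \<Rightarrow> nat) \<Rightarrow> real)
    \<Rightarrow> (('v \<Rightarrow> nat) \<Rightarrow> real) \<Rightarrow> ('v \<Rightarrow> nat) \<Rightarrow> real" where
  "gen Lam q f \<eta> = (\<Sum>\<zeta>\<in>Omega_n Lam (\<Sum>x\<in>UNIV. \<eta> x). q \<eta> \<zeta> * (f \<zeta> - f \<eta>))"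

definition is_rate :: "nat set \<Rightarrow> (('v::finite \<Rightarrow> nat) \<Rightarrow> ('v \<Rightarrow> nat) \<Rightarrow> real) \<Rightarrow> bool" where
  "is_rate Lam q \<longleftrightarrow> (\<forall>\<eta> \<zeta>. \<eta> \<noteq> \<zeta> \<longrightarrow> q \<eta> \<zeta> \<ge> 0)"

text \<open>Transition semigroup P_t = exp(t L): E_\<eta>[f(\<eta>(t))] (each Omega_n is finite).\<close>
definition expect :: "nat set \<Rightarrow> (('v::finite \<Rightarrow> nat) \<Rightarrow> ('v \<Rightarrow> nat) \<Rightarrow> real)
    \<Rightarrow> real \<Rightarrow> (('v \<Rightarrow> nat) \<Rightarrow> real) \<Rightarrow> ('v \<Rightarrow> nat) \<Rightarrow> real" where
  "expect Lam q t f \<eta> = (\<Sum>k. t ^ k / fact k * ((gen Lam q ^^ k) f) \<eta>)"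

definition prob_at :: "nat set \<Rightarrow> (('v::finite \<Rightarrow> nat) \<Rightarrow> ('v \<Rightarrow> nat) \<Rightarrow> real)
    \<Rightarrow> real \<Rightarrow> ('v \<Rightarrow> nat) \<Rightarrow> ('v \<Rightarrow> nat) \<Rightarrow> real" where
  "prob_at Lam q t \<eta> \<xi> = expect Lam q t (\<lambda>\<zeta>. if \<zeta> = \<xi> then 1 else 0) \<eta>"

definition annih :: "(('v::finite \<Rightarrow> nat) \<Rightarrow> real) \<Rightarrow> ('v \<Rightarrow> nat) \<Rightarrow> real" where
  "annih f \<eta> = (\<Sum>x\<in>UNIV. real (\<eta> x) * f (\<eta>(x := \<eta> x - 1)))"

definition consistent :: "nat set \<Rightarrow> (('v::finite \<Rightarrow> nat) \<Rightarrow> ('v \<Rightarrow> nat) \<Rightarrow> real) \<Rightarrow> bool" where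
  "consistent Lam q \<longleftrightarrow>
     (\<forall>f \<eta>. \<eta> \<in> Omega Lam \<longrightarrow> gen Lam q (annih f) \<eta> = annih (gen Lam q f) \<eta>)"

end

theory Submission
  imports Defs
begin

definition cntf :: "(nat \<Rightarrow> 'v) \<Rightarrow> nat set \<Rightarrow> 'v \<Rightarrow> nat" where
  "cntf f K = (\<lambda>v. card {i\<in>K. f i = v})"

lemma phi_nths: "phi (nths xs K) = cntf (nth xs) (K \<inter> {..<length xs})"
proof (induction xs arbitrary: K)
  case Nil
  then show ?case by (auto simp: phi_def cntf_def)
next
  case (Cons x xs)
  show ?case
  proof
    fix v
    let ?K' = "{j. Suc j \<in> K}"
    have IH: "count (mset (nths xs ?K')) v = card {i\<in>?K' \<inter> {..<length xs}. xs ! i = v}"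
      using Cons.IH[of ?K'] by (metis cntf_def phi_def)
    have set: "{i \<in> K \<inter> {..<length (x#xs)}. (x#xs) ! i = v}
       = (if 0 \<in> K \<and> x = v then {0} else {}) \<union> Suc ` {i\<in>?K' \<inter> {..<length xs}. xs ! i = v}"
      by (rule set_eqI, case_tac xa) (auto simp: image_iff)
    have "card {i \<in> K \<inter> {..<length (x#xs)}. (x#xs) ! i = v}
       = (if 0 \<in> K \<and> x = v then 1 else 0) + card {i\<in>?K' \<inter> {..<length xs}. xs ! i = v}"
      unfolding set by (subst card_Un_disjoint) (auto simp: card_image)
    then show "phi (nths (x # xs) K) v = cntf ((!) (x # xs)) (K \<inter> {..<length (x # xs)}) v"
      using IH by (auto simp add: phi_def cntf_def nths_Cons)
  qed
qed

lemma cntf_remove: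
  assumes "finite S" "i \<in> S"
  shows "cntf f (S - {i}) = (cntf f S)(f i := cntf f S (f i) - 1)"
proof
  fix v
  show "cntf f (S - {i}) v = ((cntf f S)(f i := cntf f S (f i) - 1)) v"
  proof (cases "v = f i")
    case True
    have "{k \<in> S - {i}. f k = v} = {k \<in> S. f k = v} - {i}" by auto
    then show ?thesis using True assms by (simp add: cntf_def card_Diff_singleton)
  next
    case False
    have "{k \<in> S - {i}. f k = v} = {k \<in> S. f k = v}" using False by auto
    then show ?thesis using False by (simp add: cntf_def)
  qed
qed

lemma annih_cnt:
  fixes f :: "nat \<Rightarrow> 'v::finite"
  assumes "finite S"
  shows "annih h (cntf f S) = (\<Sum>i\<in>S. h (cntf f (S - {i})))"
proof -
  let ?G = "\<lambda>v. (cntf f S)(v := cntf f S v - 1)"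
  have "(\<Sum>i\<in>S. h (cntf f (S - {i}))) = (\<Sum>i\<in>S. h (?G (f i)))"
    by (rule sum.cong[OF refl]) (metis cntf_remove[OF assms])
  also have "\<dots> = (\<Sum>v\<in>UNIV. \<Sum>i\<in>{i. i \<in> S \<and> f i = v}. h (?G (f i)))"
    by (rule sum.group[symmetric]) (use assms in auto)
  also have "\<dots> = (\<Sum>v\<in>UNIV. real (cntf f S v) * h (?G v))"
    by (rule sum.cong) (auto simp: cntf_def)
  finally show ?thesis by (simp add: annih_def)
qed

lemma annih_pow_cnt:
  fixes f :: "nat \<Rightarrow> 'v::finite"
  assumes "finite S" "j \<le> card S"
  shows "(annih ^^ j) h (cntf f S) = fact j * (\<Sum>K\<in>{K. K \<subseteq> S \<and> card K = card S - j}. h (cntf f K))"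
  using assms
proof (induction j arbitrary: S)
  case 0
  have "{K. K \<subseteq> S \<and> card K = card S} = {S}"
    using 0 by (auto dest: card_subset_eq)
  then show ?case by simp
next
  case (Suc j)
  define c where "c = card S - Suc j"
  let ?g = "\<lambda>K. h (cntf f K)"
  have "(annih ^^ Suc j) h (cntf f S) = (\<Sum>i\<in>S. (annih ^^ j) h (cntf f (S - {i})))"
    using annih_cnt[OF Suc.prems(1)] by simp
  also have "\<dots> = (\<Sum>i\<in>S. fact j * (\<Sum>K\<in>{K. K \<subseteq> S - {i} \<and> card K = c}. ?g K))"
  proof (rule sum.cong[OF refl])
    fix i assume i: "i \<in> S"
    have "card (S - {i}) = card S - 1" using i Suc.prems by simp
    then show "(annih ^^ j) h (cntf f (S - {i})) = fact j * (\<Sum>K\<in>{K. K \<subseteq> S - {i} \<and> card K = c}. ?g K)"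
      using Suc.IH[of "S - {i}"] Suc.prems unfolding c_def by simp
  qed
  also have "\<dots> = fact j * (\<Sum>i\<in>S. \<Sum>K\<in>{K. K \<in> {K. K \<subseteq> S \<and> card K = c} \<and> i \<notin> K}. ?g K)"
    by (simp add: sum_distrib_left) (rule sum.cong; auto intro!: sum.cong)
  also have "\<dots> = fact j * (\<Sum>K\<in>{K. K \<subseteq> S \<and> card K = c}. \<Sum>i\<in>{i. i \<in> S \<and> i \<notin> K}. ?g K)"
    by (subst sum.swap_restrict) (use Suc.prems in auto)
  also have "\<dots> = fact j * (\<Sum>K\<in>{K. K \<subseteq> S \<and> card K = c}. real (Suc j) * ?g K)"
  proof -
    have "card {i. i \<in> S \<and> i \<notin> K} = Suc j" if "K \<subseteq> S" "card K = c" for K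
    proof -
      have "{i. i \<in> S \<and> i \<notin> K} = S - K" by auto
      then show ?thesis using that Suc.prems unfolding c_def
        by (simp add: card_Diff_subset finite_subset)
    qed
    then show ?thesis by (auto intro!: sum.cong)
  qed
  also have "\<dots> = fact (Suc j) * (\<Sum>K\<in>{K. K \<subseteq> S \<and> card K = c}. ?g K)"
    by (simp add: sum_distrib_left mult_ac)
  finally show ?case unfolding c_def .
qed

lemma Fdual_zero:
  fixes \<xi> \<eta> :: "'v::finite \<Rightarrow> nat"
  assumes "\<eta> y < \<xi> y"
  shows "Fdual \<xi> \<eta> = 0"
  unfolding Fdual_def using assms by (intro prod_zero) auto

lemma Fdual_remove:
  fixes \<xi> \<eta> :: "'v::finite \<Rightarrow> nat"
  shows "Fdual \<xi> \<eta> = real (\<eta> x choose \<xi> x) * (\<Prod>y\<in>UNIV - {x}. real (\<eta> y choose \<xi> y))"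
  unfolding Fdual_def by (subst prod.remove[of _ x]) auto

lemma sum_upd_minus:
  fixes \<eta> :: "'v::finite \<Rightarrow> nat"
  assumes "\<eta> x > 0"
  shows "(\<Sum>y\<in>UNIV. (\<eta>(x := \<eta> x - 1)) y) = (\<Sum>y\<in>UNIV. \<eta> y) - 1"
proof -
  have a: "(\<Sum>y\<in>UNIV. (\<eta>(x := \<eta> x - 1)) y) = (\<eta> x - 1) + (\<Sum>y\<in>UNIV - {x}. \<eta> y)"
    by (subst sum.remove[of _ x]) (auto intro!: sum.cong)
  have b: "(\<Sum>y\<in>UNIV. \<eta> y) = \<eta> x + (\<Sum>y\<in>UNIV - {x}. \<eta> y)"
    by (subst sum.remove[of _ x]) auto
  show ?thesis using a b assms by simp
qed

lemma annih_pow_ind: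
  fixes \<xi> :: "'v::finite \<Rightarrow> nat"
  assumes "(\<Sum>y\<in>UNIV. \<eta> y) = (\<Sum>y\<in>UNIV. \<xi> y) + j"
  shows "(annih ^^ j) (\<lambda>\<zeta>. if \<zeta> = \<xi> then 1 else 0) \<eta> = fact j * Fdual \<xi> \<eta>"
  using assms
proof (induction j arbitrary: \<eta>)
  case 0
  show ?case
  proof (cases "\<eta> = \<xi>")
    case True
    then show ?thesis by (simp add: Fdual_def)
  next
    case False
    have "\<exists>y. \<eta> y < \<xi> y"
    proof (rule ccontr)
      assume "\<not> ?thesis"
      then have le: "\<forall>y. \<xi> y \<le> \<eta> y" by (auto simp: not_less)
      have "(\<Sum>y\<in>UNIV. \<eta> y - \<xi> y) = 0"
        using 0 le by (simp add: sum_subtractf_nat)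
      then have "\<forall>y. \<eta> y = \<xi> y" using le by (simp add: le_antisym)
      then show False using False by auto
    qed
    then show ?thesis using False Fdual_zero by auto
  qed
next
  case (Suc j)
  let ?ind = "\<lambda>\<zeta>. if \<zeta> = \<xi> then 1 else (0::real)"
  have step: "real (\<eta> x) * (annih ^^ j) ?ind (\<eta>(x := \<eta> x - 1))
      = fact j * (real (\<eta> x - \<xi> x) * Fdual \<xi> \<eta>)" for x
  proof (cases "\<eta> x = 0")
    case True
    then show ?thesis by simp
  next
    case False
    then have "(\<Sum>y\<in>UNIV. (\<eta>(x := \<eta> x - 1)) y) = (\<Sum>y\<in>UNIV. \<xi> y) + j"
      using Suc.prems sum_upd_minus[of \<eta> x] by simp
    then have "(annih ^^ j) ?ind (\<eta>(x := \<eta> x - 1)) = fact j * Fdual \<xi> (\<eta>(x := \<eta> x - 1))"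
      using Suc.IH by blast
    moreover have "Fdual \<xi> (\<eta>(x := \<eta> x - 1)) = real ((\<eta> x - 1) choose \<xi> x) * (\<Prod>y\<in>UNIV - {x}. real (\<eta> y choose \<xi> y))"
      by (subst Fdual_remove[of _ _ x]) (auto intro!: prod.cong)
    moreover have "real (\<eta> x) * real ((\<eta> x - 1) choose \<xi> x) = real (\<eta> x - \<xi> x) * real (\<eta> x choose \<xi> x)"
      by (metis binomial_absorb_comp of_nat_mult)
    ultimately show ?thesis by (simp add: Fdual_remove[of _ _ x] mult_ac)
  qed
  have "(annih ^^ Suc j) ?ind \<eta> = (\<Sum>x\<in>UNIV. real (\<eta> x) * (annih ^^ j) ?ind (\<eta>(x := \<eta> x - 1)))"
    by (simp add: annih_def)
  also have "\<dots> = fact j * Fdual \<xi> \<eta> * real (\<Sum>x\<in>UNIV. \<eta> x - \<xi> x)"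
    unfolding step by (simp add: sum_distrib_left sum_distrib_right mult_ac)
  also have "\<dots> = fact (Suc j) * Fdual \<xi> \<eta>"
  proof (cases "\<forall>y. \<xi> y \<le> \<eta> y")
    case True
    then have "(\<Sum>x\<in>UNIV. \<eta> x - \<xi> x) = Suc j"
      using Suc.prems by (simp add: sum_subtractf_nat)
    then show ?thesis by simp
  next
    case False
    then show ?thesis using Fdual_zero by (auto simp: not_le)
  qed
  finally show ?case .
qed

lemma Omega_iff: "\<zeta> \<in> Omega Lam \<longleftrightarrow> (\<forall>x. \<zeta> x \<in> Lam)"
  by (auto simp: Omega_def Omega_n_def)

lemma Omega_n_sub: "Omega_n Lam N \<subseteq> Omega Lam"
  by (auto simp: Omega_def)

lemma finite_Omega_n: "finite (Omega_n Lam N :: ('v::finite \<Rightarrow> nat) set)"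
proof -
  have "Omega_n Lam N \<subseteq> (Pi\<^sub>E (UNIV::'v set) (\<lambda>_. {..N}))"
  proof
    fix \<zeta> :: "'v \<Rightarrow> nat" assume "\<zeta> \<in> Omega_n Lam N"
    then have "\<zeta> x \<le> N" for x
      unfolding Omega_n_def using member_le_sum[of x UNIV \<zeta>] by auto
    then show "\<zeta> \<in> Pi\<^sub>E UNIV (\<lambda>_. {..N})" by (auto simp: PiE_UNIV_domain)
  qed
  moreover have "finite (Pi\<^sub>E (UNIV::'v set) (\<lambda>_. {..N}))" by (rule finite_PiE) auto
  ultimately show ?thesis by (rule finite_subset)
qed

lemma gen_cong:
  assumes "\<forall>\<zeta>\<in>Omega Lam. g1 \<zeta> = g2 \<zeta>" "\<eta> \<in> Omega Lam"
  shows "gen Lam q g1 \<eta> = gen Lam q g2 \<eta>"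
  unfolding gen_def using assms Omega_n_sub by (intro sum.cong) auto

lemma annih_cong:
  assumes Lam_down: "\<And>k j. k \<in> Lam \<Longrightarrow> j \<le> k \<Longrightarrow> j \<in> Lam"
  assumes "\<forall>\<zeta>\<in>Omega Lam. g1 \<zeta> = g2 \<zeta>" "\<eta> \<in> Omega Lam"
  shows "annih g1 \<eta> = annih g2 \<eta>"
  unfolding annih_def
proof (rule sum.cong[OF refl])
  fix x
  have "\<eta>(x := \<eta> x - 1) \<in> Omega Lam"
    using assms(3) Lam_down[of "\<eta> x" "\<eta> x - 1"] unfolding Omega_iff by auto
  then show "real (\<eta> x) * g1 (\<eta>(x := \<eta> x - 1)) = real (\<eta> x) * g2 (\<eta>(x := \<eta> x - 1))"
    using assms(2) by simp
qed

lemma annih_pow_cong: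
  assumes Lam_down: "\<And>k j. k \<in> Lam \<Longrightarrow> j \<le> k \<Longrightarrow> j \<in> Lam"
  assumes "\<forall>\<zeta>\<in>Omega Lam. g1 \<zeta> = g2 \<zeta>"
  shows "\<forall>\<eta>\<in>Omega Lam. (annih ^^ j) g1 \<eta> = (annih ^^ j) g2 \<eta>"
  using assms(2)
  by (induction j) (auto intro: annih_cong[OF Lam_down])

lemma gen_annih_pow:
  fixes q :: "('v::finite \<Rightarrow> nat) \<Rightarrow> ('v \<Rightarrow> nat) \<Rightarrow> real"
  assumes Lam_down: "\<And>k j. k \<in> Lam \<Longrightarrow> j \<le> k \<Longrightarrow> j \<in> Lam"
    and cons: "consistent Lam q"
  shows "\<forall>\<eta>\<in>Omega Lam. gen Lam q ((annih ^^ j) f) \<eta> = (annih ^^ j) (gen Lam q f) \<eta>"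
proof (induction j)
  case 0
  then show ?case by simp
next
  case (Suc j)
  show ?case
  proof
    fix \<eta> :: "'v \<Rightarrow> nat" assume e: "\<eta> \<in> Omega Lam"
    have "gen Lam q ((annih ^^ Suc j) f) \<eta> = annih (gen Lam q ((annih ^^ j) f)) \<eta>"
      using cons e unfolding consistent_def by simp
    also have "\<dots> = annih ((annih ^^ j) (gen Lam q f)) \<eta>"
      by (rule annih_cong[OF Lam_down Suc.IH e])
    finally show "gen Lam q ((annih ^^ Suc j) f) \<eta> = (annih ^^ Suc j) (gen Lam q f) \<eta>" by simp
  qed
qed

lemma genpow_annih_pow:
  fixes q :: "('v::finite \<Rightarrow> nat) \<Rightarrow> ('v \<Rightarrow> nat) \<Rightarrow> real"
  assumes Lam_down: "\<And>k j. k \<in> Lam \<Longrightarrow> j \<le> k \<Longrightarrow> j \<in> Lam"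
    and cons: "consistent Lam q"
  shows "\<forall>\<eta>\<in>Omega Lam. (gen Lam q ^^ k) ((annih ^^ j) f) \<eta> = (annih ^^ j) ((gen Lam q ^^ k) f) \<eta>"
proof (induction k)
  case 0
  then show ?case by simp
next
  case (Suc k)
  show ?case
  proof
    fix \<eta> :: "'v \<Rightarrow> nat" assume e: "\<eta> \<in> Omega Lam"
    have "(gen Lam q ^^ Suc k) ((annih ^^ j) f) \<eta> = gen Lam q ((gen Lam q ^^ k) ((annih ^^ j) f)) \<eta>"
      by simp
    also have "\<dots> = gen Lam q ((annih ^^ j) ((gen Lam q ^^ k) f)) \<eta>"
      by (rule gen_cong[OF Suc.IH e])
    also have "\<dots> = (annih ^^ j) (gen Lam q ((gen Lam q ^^ k) f)) \<eta>"
      using gen_annih_pow[of Lam q] Lam_down cons e by blast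
    finally show "(gen Lam q ^^ Suc k) ((annih ^^ j) f) \<eta> = (annih ^^ j) ((gen Lam q ^^ Suc k) f) \<eta>" by simp
  qed
qed

lemma genpow_cong_level:
  fixes q :: "('v::finite \<Rightarrow> nat) \<Rightarrow> ('v \<Rightarrow> nat) \<Rightarrow> real"
  assumes "\<forall>\<zeta>\<in>Omega_n Lam N. g1 \<zeta> = g2 \<zeta>"
  shows "\<forall>\<eta>\<in>Omega_n Lam N. (gen Lam q ^^ k) g1 \<eta> = (gen Lam q ^^ k) g2 \<eta>"
proof (induction k)
  case 0
  then show ?case using assms by simp
next
  case (Suc k)
  show ?case
  proof
    fix \<eta> :: "'v \<Rightarrow> nat" assume e: "\<eta> \<in> Omega_n Lam N"
    then have N: "(\<Sum>x\<in>UNIV. \<eta> x) = N" by (simp add: Omega_n_def)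
    have IH: "\<forall>\<zeta>\<in>Omega_n Lam (\<Sum>x\<in>UNIV. \<eta> x). (gen Lam q ^^ k) g1 \<zeta> = (gen Lam q ^^ k) g2 \<zeta>"
      using Suc.IH N by simp
    have "gen Lam q ((gen Lam q ^^ k) g1) \<eta> = gen Lam q ((gen Lam q ^^ k) g2) \<eta>"
      unfolding gen_def[of Lam q "(gen Lam q ^^ k) g1"] gen_def[of Lam q "(gen Lam q ^^ k) g2"]
      using IH e Suc.IH by (intro sum.cong) auto
    then show "(gen Lam q ^^ Suc k) g1 \<eta> = (gen Lam q ^^ Suc k) g2 \<eta>" by simp
  qed
qed

lemma gen_scale: "gen Lam q (\<lambda>\<zeta>. c * g \<zeta>) = (\<lambda>\<eta>. c * gen Lam q g \<eta>)"
  by (rule ext) (simp add: gen_def sum_distrib_left algebra_simps)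

lemma genpow_scale: "(gen Lam q ^^ k) (\<lambda>\<zeta>. c * g \<zeta>) = (\<lambda>\<eta>. c * (gen Lam q ^^ k) g \<eta>)"
  by (induction k) (simp_all add: gen_scale)

lemma expect_summable:
  fixes \<eta> :: "'v::finite \<Rightarrow> nat"
  shows "summable (\<lambda>k. t ^ k / fact k * (gen Lam q ^^ k) f \<eta>)"
proof -
  define N where "N = (\<Sum>x\<in>UNIV. \<eta> x)"
  define Om where "Om = (Omega_n Lam N :: ('v \<Rightarrow> nat) set)"
  define T where "T = insert \<eta> Om"
  have fOm: "finite Om" unfolding Om_def by (rule finite_Omega_n)
  then have fT: "finite T" unfolding T_def by simp
  have szT: "\<And>\<zeta>. \<zeta> \<in> T \<Longrightarrow> Omega_n Lam (\<Sum>x\<in>UNIV. \<zeta> x) = Om"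
    unfolding T_def Om_def N_def by (auto simp: Omega_n_def)
  define C where "C = 2 * (\<Sum>\<zeta>\<in>T. \<Sum>\<zeta>'\<in>Om. \<bar>q \<zeta> \<zeta>'\<bar>)"
  define B where "B = (\<Sum>\<zeta>\<in>T. \<bar>f \<zeta>\<bar>)"
  have C0: "C \<ge> 0" unfolding C_def by (intro mult_nonneg_nonneg sum_nonneg) auto
  have B0: "B \<ge> 0" unfolding B_def by (intro sum_nonneg) auto
  have bound: "\<forall>\<zeta>\<in>T. \<bar>(gen Lam q ^^ k) f \<zeta>\<bar> \<le> C ^ k * B" for k
  proof (induction k)
    case 0
    then show ?case unfolding B_def using fT by (auto intro: member_le_sum)
  next
    case (Suc k)
    let ?g = "(gen Lam q ^^ k) f"
    show ?case
    proof
      fix \<zeta> assume z: "\<zeta> \<in> T"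
      have "\<bar>(gen Lam q ^^ Suc k) f \<zeta>\<bar> = \<bar>\<Sum>\<zeta>'\<in>Om. q \<zeta> \<zeta>' * (?g \<zeta>' - ?g \<zeta>)\<bar>"
        by (simp add: gen_def szT[OF z])
      also have "\<dots> \<le> (\<Sum>\<zeta>'\<in>Om. \<bar>q \<zeta> \<zeta>' * (?g \<zeta>' - ?g \<zeta>)\<bar>)"
        by (rule sum_abs)
      also have "\<dots> \<le> (\<Sum>\<zeta>'\<in>Om. \<bar>q \<zeta> \<zeta>'\<bar> * (2 * (C ^ k * B)))"
      proof (rule sum_mono)
        fix \<zeta>' assume z': "\<zeta>' \<in> Om"
        have "\<bar>?g \<zeta>' - ?g \<zeta>\<bar> \<le> 2 * (C ^ k * B)"
          using Suc.IH z z' unfolding T_def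
          by (smt (verit, best) insert_iff)
        then show "\<bar>q \<zeta> \<zeta>' * (?g \<zeta>' - ?g \<zeta>)\<bar> \<le> \<bar>q \<zeta> \<zeta>'\<bar> * (2 * (C ^ k * B))"
          by (simp add: abs_mult mult_left_mono)
      qed
      also have "\<dots> = 2 * (\<Sum>\<zeta>'\<in>Om. \<bar>q \<zeta> \<zeta>'\<bar>) * (C ^ k * B)"
        by (simp add: sum_distrib_left sum_distrib_right mult_ac)
      also have "\<dots> \<le> C * (C ^ k * B)"
      proof (rule mult_right_mono)
        have "(\<Sum>\<zeta>'\<in>Om. \<bar>q \<zeta> \<zeta>'\<bar>) \<le> (\<Sum>\<zeta>\<in>T. \<Sum>\<zeta>'\<in>Om. \<bar>q \<zeta> \<zeta>'\<bar>)"
          using z fT by (intro member_le_sum[of \<zeta> T "\<lambda>\<zeta>. \<Sum>\<zeta>'\<in>Om. \<bar>q \<zeta> \<zeta>'\<bar>"]) (auto intro: sum_nonneg)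
        then show "2 * (\<Sum>\<zeta>'\<in>Om. \<bar>q \<zeta> \<zeta>'\<bar>) \<le> C" unfolding C_def by simp
        show "0 \<le> C ^ k * B" using C0 B0 by simp
      qed
      finally show "\<bar>(gen Lam q ^^ Suc k) f \<zeta>\<bar> \<le> C ^ Suc k * B" by simp
    qed
  qed
  have "summable (\<lambda>k. B * (inverse (fact k) * (\<bar>t\<bar> * C) ^ k))"
    by (intro summable_mult summable_exp)
  then show ?thesis
  proof (rule summable_comparison_test')
    fix k :: nat
    have "\<bar>(gen Lam q ^^ k) f \<eta>\<bar> \<le> C ^ k * B" using bound unfolding T_def by simp
    then have "\<bar>t\<bar> ^ k / fact k * \<bar>(gen Lam q ^^ k) f \<eta>\<bar> \<le> \<bar>t\<bar> ^ k / fact k * (C ^ k * B)"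
      by (intro mult_left_mono) auto
    then show "norm (t ^ k / fact k * (gen Lam q ^^ k) f \<eta>) \<le> B * (inverse (fact k) * (\<bar>t\<bar> * C) ^ k)"
      by (simp add: abs_mult power_abs power_mult_distrib field_simps)
  qed
qed

theorem theorem3p7:
  fixes Lam :: "nat set"
    and q :: "('v::finite \<Rightarrow> nat) \<Rightarrow> ('v \<Rightarrow> nat) \<Rightarrow> real"
    and xs :: "'v list" and n m :: nat and \<xi> :: "'v \<Rightarrow> nat" and t :: real
  assumes Lam_down: "\<And>k j. k \<in> Lam \<Longrightarrow> j \<le> k \<Longrightarrow> j \<in> Lam"
    and rate: "is_rate Lam q"
    and cons: "consistent Lam q"
    and xs: "xs \<in> V_n Lam n"
    and m: "1 \<le> m" "m \<le> n - 1"
    and xi: "\<xi> \<in> Omega_n Lam m"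
    and t: "0 \<le> t"
  shows "expect Lam q t (Fdual \<xi>) (phi xs)
         = (\<Sum>I\<in>{I. I \<subseteq> {..<n} \<and> card I = m}. prob_at Lam q t (phi (nths xs I)) \<xi>)"
proof -
  define j where "j = n - m"
  define ind where "ind = (\<lambda>\<zeta>::'v \<Rightarrow> nat. if \<zeta> = \<xi> then 1 else (0::real))"
  define \<I> where "\<I> = {I. I \<subseteq> {..<n} \<and> card I = m}"
  have len: "length xs = n" and pxs: "phi xs \<in> Omega_n Lam n" using xs by (auto simp: V_n_def)
  have jn: "j \<le> n" "n - j = m" using m unfolding j_def by auto
  have szxi: "(\<Sum>y\<in>UNIV. \<xi> y) = m" using xi by (simp add: Omega_n_def)
  have phixs: "phi xs = cntf (nth xs) {..<n}"
    using phi_nths[of xs "{..<n}"] len by (simp add: nths_all)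
  have phiI: "phi (nths xs I) = cntf (nth xs) I" if "I \<subseteq> {..<n}" for I
    using phi_nths[of xs I] len that by (simp add: Int_absorb2)
  have termeq: "(gen Lam q ^^ k) (Fdual \<xi>) (phi xs) = (\<Sum>I\<in>\<I>. (gen Lam q ^^ k) ind (phi (nths xs I)))" for k
  proof -
    have eqlev: "\<forall>\<zeta>\<in>Omega_n Lam n. fact j * Fdual \<xi> \<zeta> = (annih ^^ j) ind \<zeta>"
    proof
      fix \<zeta> :: "'v \<Rightarrow> nat" assume "\<zeta> \<in> Omega_n Lam n"
      then have "(\<Sum>y\<in>UNIV. \<zeta> y) = (\<Sum>y\<in>UNIV. \<xi> y) + j" using szxi jn by (simp add: Omega_n_def)
      then show "fact j * Fdual \<xi> \<zeta> = (annih ^^ j) ind \<zeta>"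
        unfolding ind_def by (simp add: annih_pow_ind)
    qed
    have "fact j * (gen Lam q ^^ k) (Fdual \<xi>) (phi xs) = (gen Lam q ^^ k) (\<lambda>\<zeta>. fact j * Fdual \<xi> \<zeta>) (phi xs)"
      by (simp add: genpow_scale)
    also have "\<dots> = (gen Lam q ^^ k) ((annih ^^ j) ind) (phi xs)"
      using genpow_cong_level[OF eqlev, where q=q and k=k] pxs by blast
    also have "\<dots> = (annih ^^ j) ((gen Lam q ^^ k) ind) (phi xs)"
      using genpow_annih_pow[of Lam q k j ind] Lam_down cons pxs Omega_n_sub by blast
    also have "\<dots> = fact j * (\<Sum>K\<in>{K. K \<subseteq> {..<n} \<and> card K = card {..<n} - j}. (gen Lam q ^^ k) ind (cntf (nth xs) K))"
      unfolding phixs by (rule annih_pow_cnt) (use jn in auto)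
    also have "\<dots> = fact j * (\<Sum>I\<in>\<I>. (gen Lam q ^^ k) ind (phi (nths xs I)))"
      unfolding \<I>_def using jn by (auto intro!: sum.cong simp: phiI)
    finally show ?thesis by simp
  qed
  have "expect Lam q t (Fdual \<xi>) (phi xs) = (\<Sum>k. \<Sum>I\<in>\<I>. t ^ k / fact k * (gen Lam q ^^ k) ind (phi (nths xs I)))"
    unfolding expect_def termeq by (simp add: sum_distrib_left)
  also have "\<dots> = (\<Sum>I\<in>\<I>. \<Sum>k. t ^ k / fact k * (gen Lam q ^^ k) ind (phi (nths xs I)))"
    by (rule suminf_sum) (rule expect_summable)
  also have "\<dots> = (\<Sum>I\<in>\<I>. prob_at Lam q t (phi (nths xs I)) \<xi>)"
    by (simp add: prob_at_def expect_def ind_def)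
  finally show ?thesis unfolding \<I>_def .
qed

end
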